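(* Let $p$ be a prime, $n\ge1$, $(n_1,\dots,n_s)$ a partition of $n$, and for each $i$ let $1,\omega_i,\dots,\omega_i^{n_i-1}$ be a basis of $\mathbb{F}_{p^{n_i}}$ over $\mathbb{F}_p$ (with $\omega_i$ a root of an irreducible polynomial of degree $n_i$ over $\mathbb{F}_p$). Let $\mathbf{z}=(z_1,\dots,z_s)$ with $z_i\in\mathbb{F}_{p^{n_i}}\setminus\{0\}$. Let $A,A'\in\mathrm{GL}_n(\mathbb{F}_p)$, whose rows, indexed in blocks as $(i,j)$ with $1\le i\le s$, $1\le j\le n_i$, define linear forms $L_{i,j}$ and $L'_{i,j}$ respectively, and put $\lambda_i(\mathbf{x})=\sum_{j}L_{i,j}(\mathbf{x})\omega_i^{j-1}$, $\lambda_i'(\mathbf{y})=\sum_jL'_{i,j}(\mathbf{y})\omega_i^{j-1}$. Define the lattice $$\mathcal{L}_{\mathbf{z}}=\{(\mathbf{x},\mathbf{y})\in\mathbb{Z}^{2n}:\lambda_i(\mathbf{x})=z_i\lambda_i'(\mathbf{y})\text{ in }\mathbb{F}_{p^{n_i}}\text{ for }1\le i\le s\}.$$ Then there exist $A'',A'''\in\mathrm{GL}_n(\mathbb{F}_p)$, with associated linear forms $L''_{i,j},L'''_{i,j}$ and $\lambda_i''(\mathbf{v})=\sum_jL''_{i,j}(\mathbf{v})\omega_i^{j-1}$, $\lambda_i'''(\mathbf{u})=\sum_jL'''_{i,j}(\mathbf{u})\omega_i^{j-1}$, such that $$p\mathcal{L}_{\mathbf{z}}^*=\{(\mathbf{u},\mathbf{v})\in\mathbb{Z}^{2n}:\lambda_i''(\mathbf{v})=z_i\lambda_i'''(\mathbf{u})\text{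 in }\mathbb{F}_{p^{n_i}}\text{ for }1\le i\le s\}.$$
   Context: The dual lattice of a full-rank lattice $\mathcal{L}\subseteq\mathbb{R}^m$ is $\mathcal{L}^*=\{\mathbf{u}\in\mathbb{R}^m:\langle\mathbf{u},\mathbf{x}\rangle\in\mathbb{Z}\ \forall\mathbf{x}\in\mathcal{L}\}$. Linear forms over $\mathbb{F}_p$ are evaluated at integer vectors by reduction mod $p$. *)

theory Defs
  imports "Berlekamp_Zassenhaus.Finite_Field" "Jordan_Normal_Form.Matrix"
    "HOL-Computational_Algebra.Polynomial"
begin

definition dual_lattice :: "nat \<Rightarrow> real vec set \<Rightarrow> real vec set" where
  "dual_lattice m L = {u \<in> carrier_vec m. \<forall>x\<in>L. u \<bullet> x \<in> \<int>}"

text \<open>Offset of block i in a partition ns: rows (i,j) of a matrix are row blk_off ns i + j.\<close>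
definition blk_off :: "nat list \<Rightarrow> nat \<Rightarrow> nat" where
  "blk_off ns i = sum_list (take i ns)"

definition lin_form :: "'a::comm_ring_1 mat \<Rightarrow> nat \<Rightarrow> int vec \<Rightarrow> 'a" where
  "lin_form A r x = (\<Sum>k<dim_vec x. A $$ (r, k) * of_int (x $ k))"

text \<open>lambda_i(x) = sum_j L_{i,j}(x) omega_i^(j-1), as an element of F_p[X] representing
  its class in F_p[X]/(f_i) = F_{p^{n_i}}, with omega_i the class of X.\<close>
definition lam :: "nat list \<Rightarrow> 'a::comm_ring_1 mat \<Rightarrow> nat \<Rightarrow> int vec \<Rightarrow> 'a poly" where
  "lam ns A i x = (\<Sum>j<ns ! i. monom (lin_form A (blk_off ns i + j) x) j)"

end

theory Submission
  imports Defs
begin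


lemma off_0[simp]: "blk_off ns 0 = 0" by (simp add: blk_off_def)
lemma off_Suc: "i < length ns \<Longrightarrow> blk_off ns (Suc i) = blk_off ns i + ns!i"
  by (simp add: blk_off_def take_Suc_conv_app_nth)
lemma off_mono: "i \<le> i' \<Longrightarrow> blk_off ns i \<le> blk_off ns i'"
proof -
  assume "i \<le> i'"
  then obtain m where "i' = i + m" using le_Suc_ex by blast
  thus ?thesis by (simp add: blk_off_def take_add)
qed
lemma off_le: "i < length ns \<Longrightarrow> blk_off ns i + ns!i \<le> sum_list ns"
proof -
  assume i: "i < length ns"
  have "blk_off ns (Suc i) \<le> blk_off ns (length ns)" using i off_mono by simp
  moreover have "blk_off ns (length ns) = sum_list ns" by (simp add: blk_off_def)
  ultimately show ?thesis using i off_Suc[of i ns] by simp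
qed
lemma blk_unique:
  assumes "i < length ns" "i' < length ns" "j < ns!i"
    "blk_off ns i' \<le> blk_off ns i + j" "blk_off ns i + j < blk_off ns i' + ns!i'"
  shows "i' = i"
proof (rule ccontr)
  assume "i' \<noteq> i"
  then consider "i < i'" | "i' < i" by linarith
  thus False
  proof cases
    case 1
    then have "blk_off ns (Suc i) \<le> blk_off ns i'" by (intro off_mono) simp
    thus False using assms off_Suc[of i ns] by simp
  next
    case 2
    then have "blk_off ns (Suc i') \<le> blk_off ns i" by (intro off_mono) simp
    thus False using assms off_Suc[of i' ns] by simp
  qed
qed
lemma off_Cons_Suc: "blk_off (a#ns) (Suc i) = a + blk_off ns i"
  by (simp add: blk_off_def)
lemma cover: "k < sum_list ns \<Longrightarrow> \<exists>i<length ns. \<exists>j<ns!i. k = blk_off ns i + j"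
proof (induction ns arbitrary: k)
  case Nil thus ?case by simp
next
  case (Cons a ns)
  show ?case
  proof (cases "k < a")
    case True thus ?thesis by (intro exI[of _ 0]) auto
  next
    case False
    then obtain i j where "i<length ns" "j<ns!i" "k - a = blk_off ns i + j"
      using Cons.IH[of "k - a"] Cons.prems False by (metis add_less_imp_less_left le_add_diff_inverse not_less sum_list.Cons)
    thus ?thesis using False by (intro exI[of _ "Suc i"]) (auto simp: off_Cons_Suc)
  qed
qed

definition Lam :: "nat list \<Rightarrow> nat \<Rightarrow> 'a::comm_ring_1 vec \<Rightarrow> 'a poly" where
  "Lam ns i c = (\<Sum>j<ns!i. monom (c $ (blk_off ns i + j)) j)"

lemma coeff_Lam: "coeff (Lam ns i c) t = (if t < ns!i then c $ (blk_off ns i + t) else 0)"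
  by (simp add: Lam_def coeff_sum coeff_monom)

lemma degree_Lam: "ns!i > 0 \<Longrightarrow> degree (Lam ns i c) < ns!i"
proof -
  assume "ns!i > 0"
  have "degree (Lam ns i c) \<le> ns!i - 1"
    by (rule degree_le) (auto simp: coeff_Lam)
  thus ?thesis using \<open>ns!i > 0\<close> by linarith
qed

lemma Lam_diff: "i < length ns \<Longrightarrow> a \<in> carrier_vec (sum_list ns) \<Longrightarrow> b \<in> carrier_vec (sum_list ns)
  \<Longrightarrow> Lam ns i (a - b) = Lam ns i a - Lam ns i b"
  by (rule poly_eqI) (use off_le[of i ns] in \<open>auto simp: coeff_Lam\<close>)

lemma Lam_add: "i < length ns \<Longrightarrow> a \<in> carrier_vec (sum_list ns) \<Longrightarrow> b \<in> carrier_vec (sum_list ns)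
  \<Longrightarrow> Lam ns i (a + b) = Lam ns i a + Lam ns i b"
  by (rule poly_eqI) (use off_le[of i ns] in \<open>auto simp: coeff_Lam\<close>)

lemma Lam_smult: "i < length ns \<Longrightarrow> a \<in> carrier_vec (sum_list ns)
  \<Longrightarrow> Lam ns i (k \<cdot>\<^sub>v a) = smult k (Lam ns i a)"
  by (rule poly_eqI) (use off_le[of i ns] in \<open>auto simp: coeff_Lam\<close>)

lemma Lam_zero[simp]: "i < length ns \<Longrightarrow> Lam ns i (0\<^sub>v (sum_list ns)) = 0"
  by (rule poly_eqI) (use off_le[of i ns] in \<open>auto simp: coeff_Lam\<close>)

definition good :: "nat list \<Rightarrow> 'a::field poly list \<Rightarrow> bool" where
  "good ns fs = (\<forall>i<length ns. fs!i \<noteq> 0 \<and> degree (fs!i) = ns!i)"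

lemma Lam_zero_imp:
  fixes fs :: "'a::field poly list"
  assumes g: "good ns fs" and d: "d \<in> carrier_vec (sum_list ns)"
    and dv: "\<forall>i<length ns. fs!i dvd Lam ns i d"
  shows "d = 0\<^sub>v (sum_list ns)"
proof (rule eq_vecI)
  show "dim_vec d = dim_vec (0\<^sub>v (sum_list ns))" using d by simp
  fix k assume "k < dim_vec (0\<^sub>v (sum_list ns))"
  then have "k < sum_list ns" by simp
  then obtain i j where ij: "i<length ns" "j<ns!i" "k = blk_off ns i + j" using cover by blast
  have "degree (Lam ns i d) < degree (fs!i)" using g ij degree_Lam[of ns i d] by (simp add: good_def)
  then have "Lam ns i d mod fs!i = Lam ns i d" by (rule mod_poly_less)
  moreover have "Lam ns i d mod fs!i = 0" using dv ij by auto
  ultimately have "Lam ns i d = 0" by simp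
  then have "coeff (Lam ns i d) j = 0" by simp
  thus "d $ k = 0\<^sub>v (sum_list ns) $ k" using ij \<open>k < sum_list ns\<close> by (simp add: coeff_Lam)
qed



definition Mm :: "nat list \<Rightarrow> 'a::field poly list \<Rightarrow> 'a poly list \<Rightarrow> 'a mat" where
  "Mm ns fs ws = mat (sum_list ns) (sum_list ns) (\<lambda>(r,k). \<Sum>i<length ns.
     if blk_off ns i \<le> r \<and> r < blk_off ns i + ns!i \<and> blk_off ns i \<le> k \<and> k < blk_off ns i + ns!i
     then coeff ((ws!i * monom 1 (k - blk_off ns i)) mod fs!i) (r - blk_off ns i) else 0)"

lemma Mm_carrier[simp]: "Mm ns fs ws \<in> carrier_mat (sum_list ns) (sum_list ns)"
  by (simp add: Mm_def)
lemma Mm_dims[simp]: "dim_row (Mm ns fs ws) = sum_list ns" "dim_col (Mm ns fs ws) = sum_list ns"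
  by (simp_all add: Mm_def)

lemma Mm_entry:
  assumes i: "i < length ns" and j: "j < ns!i" and k: "k < sum_list ns"
  shows "Mm ns fs ws $$ (blk_off ns i + j, k) =
    (if blk_off ns i \<le> k \<and> k < blk_off ns i + ns!i
     then coeff ((ws!i * monom 1 (k - blk_off ns i)) mod fs!i) j else 0)"
proof -
  have r: "blk_off ns i + j < sum_list ns" using off_le[OF i] j by simp
  have "Mm ns fs ws $$ (blk_off ns i + j, k) = (\<Sum>i'<length ns.
     if blk_off ns i' \<le> blk_off ns i + j \<and> blk_off ns i + j < blk_off ns i' + ns!i' \<and> blk_off ns i' \<le> k \<and> k < blk_off ns i' + ns!i'
     then coeff ((ws!i' * monom 1 (k - blk_off ns i')) mod fs!i') (blk_off ns i + j - blk_off ns i') else 0)"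
    using r k by (simp add: Mm_def)
  also have "\<dots> = (\<Sum>i'\<in>{i}.
     if blk_off ns i' \<le> blk_off ns i + j \<and> blk_off ns i + j < blk_off ns i' + ns!i' \<and> blk_off ns i' \<le> k \<and> k < blk_off ns i' + ns!i'
     then coeff ((ws!i' * monom 1 (k - blk_off ns i')) mod fs!i') (blk_off ns i + j - blk_off ns i') else 0)"
    by (rule sum.mono_neutral_right) (use i j blk_unique[OF i _ j] in auto)
  finally show ?thesis using j by simp
qed

lemma Mm_index:
  assumes i: "i < length ns" and j: "j < ns!i" and c: "c \<in> carrier_vec (sum_list ns)"
  shows "(Mm ns fs ws *\<^sub>v c) $ (blk_off ns i + j) =
    (\<Sum>j'<ns!i. coeff ((ws!i * monom 1 j') mod fs!i) j * c $ (blk_off ns i + j'))"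
proof -
  let ?o = "blk_off ns i"
  have r: "?o + j < sum_list ns" using off_le[OF i] j by simp
  have "(Mm ns fs ws *\<^sub>v c) $ (?o + j) = (\<Sum>k\<in>{0..<sum_list ns}. Mm ns fs ws $$ (?o + j, k) * c $ k)"
    using r c by (simp add: mult_mat_vec_def scalar_prod_def row_def)
  also have "\<dots> = (\<Sum>k\<in>{0..<sum_list ns}. (if ?o \<le> k \<and> k < ?o + ns!i
     then coeff ((ws!i * monom 1 (k - ?o)) mod fs!i) j * c $ k else 0))"
  proof (rule sum.cong)
    fix k assume "k \<in> {0..<sum_list ns}"
    thus "Mm ns fs ws $$ (?o + j, k) * c $ k = (if ?o \<le> k \<and> k < ?o + ns!i
     then coeff ((ws!i * monom 1 (k - ?o)) mod fs!i) j * c $ k else 0)"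
      using Mm_entry[OF i j, of k fs ws] by simp
  qed simp
  also have "\<dots> = (\<Sum>k\<in>{?o..<?o + ns!i}. coeff ((ws!i * monom 1 (k - ?o)) mod fs!i) j * c $ k)"
  proof -
    have "{?o..<?o + ns!i} \<subseteq> {0..<sum_list ns}" using off_le[OF i] by auto
    thus ?thesis by (subst sum.If_cases) (auto intro!: sum.cong)
  qed
  also have "\<dots> = (\<Sum>j'<ns!i. coeff ((ws!i * monom 1 j') mod fs!i) j * c $ (?o + j'))"
    by (rule sum.reindex_bij_witness[of _ "\<lambda>j'. ?o + j'" "\<lambda>k. k - ?o"]) auto
  finally show ?thesis .
qed

lemma mult_monom_smult: "(w::'a::field poly) * monom a x = smult a (w * monom 1 x)"
  by (metis mult_smult_right smult_monom mult.right_neutral)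

lemma Mm_Lam:
  fixes fs :: "'a::field poly list"
  assumes g: "good ns fs" and i: "i < length ns" and c: "c \<in> carrier_vec (sum_list ns)"
  shows "fs!i dvd Lam ns i (Mm ns fs ws *\<^sub>v c) - ws!i * Lam ns i c"
proof -
  let ?o = "blk_off ns i" and ?f = "fs!i" and ?w = "ws!i"
  define h where "h j' = ?w * monom 1 j'" for j'
  have f0: "?f \<noteq> 0" and df: "degree ?f = ns!i" using g i by (auto simp: good_def)
  have dg: "coeff (h j' mod ?f) t = 0" if "t \<ge> ns!i" for t j'
  proof (cases "h j' mod ?f = 0")
    case False
    then have "degree (h j' mod ?f) < ns!i" using degree_mod_less'[OF f0 False] df by simp
    thus ?thesis using that by (intro coeff_eq_0) simp
  qed simp
  have 1: "Lam ns i (Mm ns fs ws *\<^sub>v c) = (\<Sum>j'<ns!i. smult (c $ (?o + j')) (h j' mod ?f))"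
  proof (rule poly_eqI)
    fix t
    show "coeff (Lam ns i (Mm ns fs ws *\<^sub>v c)) t = coeff (\<Sum>j'<ns!i. smult (c $ (?o + j')) (h j' mod ?f)) t"
    proof (cases "t < ns!i")
      case True
      thus ?thesis using Mm_index[OF i True c, of fs ws]
        by (simp add: coeff_Lam coeff_sum h_def mult.commute)
    next
      case False
      thus ?thesis by (simp add: coeff_Lam coeff_sum dg)
    qed
  qed
  have 2: "?w * Lam ns i c = (\<Sum>j'<ns!i. smult (c $ (?o + j')) (h j'))"
    unfolding Lam_def h_def sum_distrib_left
    by (rule sum.cong) (simp, rule mult_monom_smult)
  have "Lam ns i (Mm ns fs ws *\<^sub>v c) - ?w * Lam ns i c = (\<Sum>j'<ns!i. smult (c $ (?o + j')) (h j' mod ?f - h j'))"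
    unfolding 1 2 by (simp add: sum_subtractf smult_diff_right)
  also have "?f dvd \<dots>"
  proof (rule dvd_sum)
    fix j'
    have "?f dvd h j' mod ?f - h j'" using mod_eq_dvd_iff[of "h j' mod ?f" ?f "h j'"] by simp
    thus "?f dvd smult (c $ (?o + j')) (h j' mod ?f - h j')" by (rule dvd_smult)
  qed
  finally show ?thesis .
qed

lemma lam_Lam:
  fixes A :: "'a::comm_ring_1 mat"
  assumes A: "A \<in> carrier_mat (sum_list ns) (sum_list ns)" and x: "x \<in> carrier_vec (sum_list ns)"
    and i: "i < length ns"
  shows "lam ns A i x = Lam ns i (A *\<^sub>v map_vec of_int x)"
  unfolding lam_def Lam_def
proof (rule sum.cong)
  fix j assume "j \<in> {..<ns!i}"
  then have r: "blk_off ns i + j < sum_list ns" using off_le[OF i] by simp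
  show "monom (lin_form A (blk_off ns i + j) x) j = monom ((A *\<^sub>v map_vec of_int x) $ (blk_off ns i + j)) j"
    using A x r by (simp add: lin_form_def mult_mat_vec_def scalar_prod_def row_def atLeast0LessThan)
qed simp



lemma Mm_vec_carrier[simp]: "Mm ns fs ws *\<^sub>v c \<in> carrier_vec (sum_list ns)"
  by (simp only: carrier_vec_def mem_Collect_eq dim_mult_mat_vec Mm_dims)

lemma vec_minus_zero:
  fixes d e :: "'a::ab_group_add vec"
  assumes "d \<in> carrier_vec n" "e \<in> carrier_vec n" "d - e = 0\<^sub>v n" shows "d = e"
proof (rule eq_vecI)
  fix i assume i: "i < dim_vec e"
  have n: "i < n" using i assms(2) by simp
  have "(d - e) $ i = 0\<^sub>v n $ i" by (simp only: assms(3))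
  also have "\<dots> = 0" using n by simp
  finally have "(d - e) $ i = 0" .
  moreover have "(d - e) $ i = d $ i - e $ i" using i by simp
  ultimately show "d $ i = e $ i" by simp
qed (use assms(1,2) in simp)

lemma ring_aux: "(X::'b::comm_ring_1) - K*L = (X - a*Y) + a*(Y - b*L) + (a*b - K)*L"
  by (simp add: algebra_simps)

lemma Mm_comp:
  fixes fs :: "'a::field poly list"
  assumes g: "good ns fs" and c: "c \<in> carrier_vec (sum_list ns)"
    and h: "\<forall>i<length ns. fs!i dvd as!i * bs!i - [:k:]"
  shows "Mm ns fs as *\<^sub>v (Mm ns fs bs *\<^sub>v c) = k \<cdot>\<^sub>v c"
proof -
  let ?n = "sum_list ns"
  let ?d = "Mm ns fs as *\<^sub>v (Mm ns fs bs *\<^sub>v c) - k \<cdot>\<^sub>v c"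
  have bc: "Mm ns fs bs *\<^sub>v c \<in> carrier_vec ?n" by (rule Mm_vec_carrier)
  have abc: "Mm ns fs as *\<^sub>v (Mm ns fs bs *\<^sub>v c) \<in> carrier_vec ?n" by (rule Mm_vec_carrier)
  have "?d = 0\<^sub>v ?n"
  proof (rule Lam_zero_imp[OF g])
    show "?d \<in> carrier_vec ?n" using c abc by (intro minus_carrier_vec) auto
    show "\<forall>i<length ns. fs ! i dvd Lam ns i ?d"
    proof (intro allI impI)
      fix i assume i: "i < length ns"
      have e: "Lam ns i ?d = (Lam ns i (Mm ns fs as *\<^sub>v (Mm ns fs bs *\<^sub>v c)) - as!i * Lam ns i (Mm ns fs bs *\<^sub>v c))
         + as!i * (Lam ns i (Mm ns fs bs *\<^sub>v c) - bs!i * Lam ns i c) + (as!i * bs!i - [:k:]) * Lam ns i c"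
      proof -
        have "Lam ns i ?d = Lam ns i (Mm ns fs as *\<^sub>v (Mm ns fs bs *\<^sub>v c)) - [:k:] * Lam ns i c"
          using Lam_diff[OF i abc, of "k \<cdot>\<^sub>v c"] Lam_smult[OF i c, of k] c by simp
        thus ?thesis by (rule trans[OF _ ring_aux])
      qed
      have t1: "fs!i dvd Lam ns i (Mm ns fs as *\<^sub>v (Mm ns fs bs *\<^sub>v c)) - as!i * Lam ns i (Mm ns fs bs *\<^sub>v c)"
        using Mm_Lam[OF g i bc, of as] .
      have t2: "fs!i dvd as!i * (Lam ns i (Mm ns fs bs *\<^sub>v c) - bs!i * Lam ns i c)"
        using Mm_Lam[OF g i c, of bs] by (rule dvd_mult)
      have t3: "fs!i dvd (as!i * bs!i - [:k:]) * Lam ns i c"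
        using h i by (intro dvd_mult2) auto
      show "fs!i dvd Lam ns i ?d" unfolding e using t1 t2 t3 by (intro dvd_add)
    qed
  qed
  thus ?thesis by (rule vec_minus_zero[OF abc smult_carrier_vec[THEN iffD2, OF c]])
qed

lemma Mm_equiv:
  fixes fs :: "'a::field poly list"
  assumes g: "good ns fs" and B: "B \<in> carrier_mat (sum_list ns) (sum_list ns)"
    and B': "B' \<in> carrier_mat (sum_list ns) (sum_list ns)"
    and a: "a \<in> carrier_vec (sum_list ns)" and b: "b \<in> carrier_vec (sum_list ns)"
  shows "(\<forall>i<length ns. fs!i dvd Lam ns i (B *\<^sub>v a) - zs!i * Lam ns i (B' *\<^sub>v b))
     \<longleftrightarrow> B *\<^sub>v a = Mm ns fs zs *\<^sub>v (B' *\<^sub>v b)"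
proof -
  let ?n = "sum_list ns"
  have Ba: "B *\<^sub>v a \<in> carrier_vec ?n" using B a by simp
  have Bb: "B' *\<^sub>v b \<in> carrier_vec ?n" using B' b by simp
  have MB: "Mm ns fs zs *\<^sub>v (B' *\<^sub>v b) \<in> carrier_vec ?n" by (rule Mm_vec_carrier)
  have key: "fs!i dvd Lam ns i (B *\<^sub>v a) - zs!i * Lam ns i (B' *\<^sub>v b)
     \<longleftrightarrow> fs!i dvd Lam ns i (B *\<^sub>v a - Mm ns fs zs *\<^sub>v (B' *\<^sub>v b))" if i: "i < length ns" for i
  proof -
    have e: "Lam ns i (B *\<^sub>v a) - zs!i * Lam ns i (B' *\<^sub>v b) =
      Lam ns i (B *\<^sub>v a - Mm ns fs zs *\<^sub>v (B' *\<^sub>v b)) + (Lam ns i (Mm ns fs zs *\<^sub>v (B' *\<^sub>v b)) - zs!i * Lam ns i (B' *\<^sub>v b))"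
      using Lam_diff[OF i Ba MB] by simp
    show ?thesis unfolding e using Mm_Lam[OF g i Bb, of zs] by (simp add: dvd_add_left_iff)
  qed
  show ?thesis
  proof
    assume H: "\<forall>i<length ns. fs!i dvd Lam ns i (B *\<^sub>v a) - zs!i * Lam ns i (B' *\<^sub>v b)"
    have H2: "\<forall>i<length ns. fs!i dvd Lam ns i (B *\<^sub>v a - Mm ns fs zs *\<^sub>v (B' *\<^sub>v b))"
      using H key by blast
    have "B *\<^sub>v a - Mm ns fs zs *\<^sub>v (B' *\<^sub>v b) \<in> carrier_vec ?n" by (rule minus_carrier_vec[OF Ba MB])
    then have "B *\<^sub>v a - Mm ns fs zs *\<^sub>v (B' *\<^sub>v b) = 0\<^sub>v ?n"
      using H2 by (rule Lam_zero_imp[OF g])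
    thus "B *\<^sub>v a = Mm ns fs zs *\<^sub>v (B' *\<^sub>v b)"
      by (rule vec_minus_zero[OF Ba MB])
  next
    assume "B *\<^sub>v a = Mm ns fs zs *\<^sub>v (B' *\<^sub>v b)"
    then have "B *\<^sub>v a - Mm ns fs zs *\<^sub>v (B' *\<^sub>v b) = 0\<^sub>v ?n" using MB by simp
    then have "\<forall>i<length ns. fs!i dvd Lam ns i (B *\<^sub>v a - Mm ns fs zs *\<^sub>v (B' *\<^sub>v b))"
      by simp
    thus "\<forall>i<length ns. fs!i dvd Lam ns i (B *\<^sub>v a) - zs!i * Lam ns i (B' *\<^sub>v b)"
      using key by blast
  qed
qed

lemma mat_eq_vec:
  fixes X Y :: "'a::comm_ring_1 mat"
  assumes X: "X \<in> carrier_mat n n" and Y: "Y \<in> carrier_mat n n"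
    and h: "\<And>c. c \<in> carrier_vec n \<Longrightarrow> X *\<^sub>v c = Y *\<^sub>v c"
  shows "X = Y"
proof (rule eq_matI)
  fix i j assume i: "i < dim_row Y" and j: "j < dim_col Y"
  have "X $$ (i,j) = (X *\<^sub>v unit_vec n j) $ i" using X Y i j by (simp add: row_def)
  also have "\<dots> = (Y *\<^sub>v unit_vec n j) $ i" using h[of "unit_vec n j"] by simp
  also have "\<dots> = Y $$ (i,j)" using X Y i j by (simp add: row_def)
  finally show "X $$ (i,j) = Y $$ (i,j)" .
qed (use X Y in auto)

lemma invI:
  fixes A B :: "'a::comm_ring_1 mat"
  assumes "A \<in> carrier_mat n n" "B \<in> carrier_mat n n" "A * B = 1\<^sub>m n" "B * A = 1\<^sub>m n"
  shows "invertible_mat A"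
  using assms unfolding invertible_mat_def inverts_mat_def square_mat.simps by auto

lemma invE:
  fixes A :: "'a::comm_ring_1 mat"
  assumes "A \<in> carrier_mat n n" "invertible_mat A"
  obtains B where "B \<in> carrier_mat n n" "A * B = 1\<^sub>m n" "B * A = 1\<^sub>m n"
proof -
  from assms obtain B where AB: "A * B = 1\<^sub>m n" and BA: "B * A = 1\<^sub>m (dim_row B)"
    unfolding invertible_mat_def inverts_mat_def by auto
  have "dim_col (A * B) = n" using AB by simp
  then have "dim_col B = n" by simp
  moreover have "dim_col (B * A) = dim_row B" using BA by simp
  then have "dim_row B = n" using assms(1) by simp
  ultimately have "B \<in> carrier_mat n n" by auto
  thus ?thesis using that AB BA \<open>dim_row B = n\<close> by auto
qed

lemma inv_mult:
  fixes A B :: "'a::comm_ring_1 mat"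
  assumes A: "A \<in> carrier_mat n n" "invertible_mat A" and B: "B \<in> carrier_mat n n" "invertible_mat B"
  shows "invertible_mat (A * B)"
proof -
  obtain A1 where A1: "A1 \<in> carrier_mat n n" "A * A1 = 1\<^sub>m n" "A1 * A = 1\<^sub>m n" using invE[OF A] by blast
  obtain B1 where B1: "B1 \<in> carrier_mat n n" "B * B1 = 1\<^sub>m n" "B1 * B = 1\<^sub>m n" using invE[OF B] by blast
  have "A * B * (B1 * A1) = A * (B * (B1 * A1))"
    using assoc_mult_mat[OF A(1) B(1), of "B1 * A1" n] B1 A1 by simp
  also have "B * (B1 * A1) = (B * B1) * A1"
    using assoc_mult_mat[OF B(1) B1(1) A1(1)] by simp
  also have "\<dots> = A1" using A1 B1 by simp
  also have "A * A1 = 1\<^sub>m n" using A1 by simp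
  finally have 1: "A * B * (B1 * A1) = 1\<^sub>m n" .
  have "B1 * A1 * (A * B) = B1 * (A1 * (A * B))"
    using assoc_mult_mat[OF B1(1) A1(1), of "A * B" n] A B by simp
  also have "A1 * (A * B) = (A1 * A) * B"
    using assoc_mult_mat[OF A1(1) A(1) B(1)] by simp
  also have "\<dots> = B" using A1 B by simp
  also have "B1 * B = 1\<^sub>m n" using B1 by simp
  finally have 2: "B1 * A1 * (A * B) = 1\<^sub>m n" .
  show ?thesis by (rule invI[OF _ _ 1 2]) (use A B A1 B1 in auto)
qed

lemma inv_transpose:
  fixes A :: "'a::comm_ring_1 mat"
  assumes A: "A \<in> carrier_mat n n" "invertible_mat A"
  shows "invertible_mat (transpose_mat A)"
proof -
  obtain A1 where A1: "A1 \<in> carrier_mat n n" "A * A1 = 1\<^sub>m n" "A1 * A = 1\<^sub>m n" using invE[OF A] by blast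
  have 1: "transpose_mat A * transpose_mat A1 = 1\<^sub>m n"
    using transpose_mult[OF A1(1) A(1)] A1(3) by simp
  have 2: "transpose_mat A1 * transpose_mat A = 1\<^sub>m n"
    using transpose_mult[OF A(1) A1(1)] A1(2) by simp
  show ?thesis by (rule invI[OF _ _ 1 2]) (use A A1 in auto)
qed




lemma map_vec_append: "map_vec f (a @\<^sub>v b) = map_vec f a @\<^sub>v map_vec f b"
  by (rule eq_vecI) (auto simp: append_vec_def Let_def)

lemma of_int_scalar: 
  assumes "a \<in> carrier_vec n" "x \<in> carrier_vec n"
  shows "(of_int (a \<bullet> x) :: 'b::comm_ring_1) = map_vec of_int a \<bullet> map_vec of_int x"
  using assms by (simp add: scalar_prod_def of_int_sum)

lemma real_scalar:
  assumes "a \<in> carrier_vec n" "x \<in> carrier_vec n" "w \<in> carrier_vec n"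
    and "\<forall>i<n. q * w $ i = real_of_int (a $ i)"
  shows "q * (w \<bullet> map_vec real_of_int x) = real_of_int (a \<bullet> x)"
proof -
  have "q * (w \<bullet> map_vec real_of_int x) = (\<Sum>i\<in>{0..<n}. q * (w $ i * real_of_int (x $ i)))"
    using assms by (simp add: scalar_prod_def sum_distrib_left)
  also have "\<dots> = (\<Sum>i\<in>{0..<n}. real_of_int (a $ i) * real_of_int (x $ i))"
  proof (rule sum.cong)
    fix i assume "i \<in> {0..<n}"
    then have "q * w $ i = real_of_int (a $ i)" using assms(4) by simp
    thus "q * (w $ i * real_of_int (x $ i)) = real_of_int (a $ i) * real_of_int (x $ i)"
      by (metis mult.assoc)
  qed simp
  also have "\<dots> = real_of_int (a \<bullet> x)" using assms by (simp add: scalar_prod_def of_int_sum)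
  finally show ?thesis .
qed

lemma mod_ring_zero_iff: "(of_int m :: 'p::prime_card mod_ring) = 0 \<longleftrightarrow> int CARD('p) dvd m"
  by (simp add: of_int_eq_0_iff_char_dvd)

lemma red_lift: "map_vec of_int (map_vec to_int_mod_ring a) = (a :: 'p::prime_card mod_ring vec)"
  by (rule eq_vecI) (auto simp: of_int_of_int_mod_ring)

lemma red_unit: "map_vec of_int (unit_vec n k :: int vec) = (unit_vec n k :: 'b::comm_ring_1 vec)"
  by (rule eq_vecI) (auto simp: unit_vec_def)

lemma red_zero[simp]: "map_vec of_int (0\<^sub>v n :: int vec) = (0\<^sub>v n :: 'b::comm_ring_1 vec)"
  by (rule eq_vecI) auto

lemma mat_vec_zero: "T \<in> carrier_mat n n \<Longrightarrow> T *\<^sub>v 0\<^sub>v n = (0\<^sub>v n :: 'a::comm_ring_1 vec)"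
  by (rule eq_vecI) (auto simp: scalar_prod_def)

lemma Mm_inv_pair:
  fixes fs :: "'a::field poly list"
  assumes g: "good ns fs" and h: "\<forall>i<length ns. fs!i dvd as!i * bs!i - [:1:]"
  shows "Mm ns fs as * Mm ns fs bs = 1\<^sub>m (sum_list ns)"
proof (rule mat_eq_vec[of _ "sum_list ns"])
  fix c :: "'a vec" assume c: "c \<in> carrier_vec (sum_list ns)"
  have "Mm ns fs as * Mm ns fs bs *\<^sub>v c = Mm ns fs as *\<^sub>v (Mm ns fs bs *\<^sub>v c)"
    by (rule assoc_mult_mat_vec[OF Mm_carrier Mm_carrier c])
  also have "\<dots> = 1 \<cdot>\<^sub>v c" by (rule Mm_comp[OF g c h])
  also have "\<dots> = 1\<^sub>m (sum_list ns) *\<^sub>v c" using c by simp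
  finally show "Mm ns fs as * Mm ns fs bs *\<^sub>v c = 1\<^sub>m (sum_list ns) *\<^sub>v c" .
qed (rule mult_carrier_mat[OF Mm_carrier Mm_carrier], simp)

theorem proposition5p2:
  fixes n :: nat and ns :: "nat list"
    and fs zs :: "'p::prime_card mod_ring poly list"
    and A A' :: "'p mod_ring mat"
  assumes "n \<ge> 1"
    and "\<forall>i<length ns. ns ! i > 0" and "sum_list ns = n"
    and "length fs = length ns" and "length zs = length ns"
    and "\<forall>i<length ns. irreducible (fs ! i) \<and> degree (fs ! i) = ns ! i"
    and "\<forall>i<length ns. \<not> (fs ! i) dvd (zs ! i)"
    and "A \<in> carrier_mat n n" and "invertible_mat A"
    and "A' \<in> carrier_mat n n" and "invertible_mat A'"
  shows "\<exists>A'' A'''. A'' \<in> carrier_mat n n \<and> invertible_mat A'' \<and>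
           A''' \<in> carrier_mat n n \<and> invertible_mat A''' \<and>
           (\<lambda>w. real CARD('p) \<cdot>\<^sub>v w) `
             dual_lattice (2 * n)
               {map_vec real_of_int (x @\<^sub>v y) | x y.
                  x \<in> carrier_vec n \<and> y \<in> carrier_vec n \<and>
                  (\<forall>i<length ns. fs ! i dvd (lam ns A i x - zs ! i * lam ns A' i y))}
           = {map_vec real_of_int (u @\<^sub>v v) | u v.
                  u \<in> carrier_vec n \<and> v \<in> carrier_vec n \<and>
                  (\<forall>i<length ns. fs ! i dvd (lam ns A'' i v - zs ! i * lam ns A''' i u))}"
proof -
  note irr = assms(6) and ndvd = assms(7)
  have nn: "sum_list ns = n" by (rule assms(3))
  have A: "A \<in> carrier_mat (sum_list ns) (sum_list ns)" using assms(8) nn by simp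
  have A': "A' \<in> carrier_mat (sum_list ns) (sum_list ns)" using assms(10) nn by simp
  have g: "good ns fs" unfolding good_def using irr by (auto simp: irreducible_def)
  have exw: "\<exists>w. fs!i dvd zs!i * w - [:-1:]" if i: "i < length ns" for i
  proof -
    let ?f = "fs!i" and ?z = "zs!i"
    have ir: "irreducible ?f" using irr i by auto
    have "gcd ?f ?z dvd ?f" by simp
    then have "?f dvd gcd ?f ?z \<or> is_unit (gcd ?f ?z)" using ir by (auto simp: irreducible_altdef)
    moreover have "\<not> ?f dvd gcd ?f ?z"
    proof
      assume "?f dvd gcd ?f ?z"
      then have "?f dvd ?z" using dvd_trans gcd_dvd2 by blast
      thus False using ndvd i by auto
    qed
    ultimately have "is_unit (gcd ?f ?z)" by blast
    then have "coprime ?f ?z" using is_unit_gcd by blast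
    then have gc: "gcd ?f ?z = 1" by (simp add: coprime_iff_gcd_eq_1)
    obtain s t where "bezout_coefficients ?f ?z = (s, t)" by (cases "bezout_coefficients ?f ?z")
    then have "s * ?f + t * ?z = 1" using bezout_coefficients gc by metis
    moreover have m1: "[:-1:] = (-1 :: 'p mod_ring poly)" unfolding one_pCons by simp
    ultimately have "?z * (- t) - [:-1:] = s * ?f" by (simp add: algebra_simps eq_diff_eq)
    then have "?f dvd ?z * (- t) - [:-1:]" by simp
    thus ?thesis by blast
  qed
  define wf where "wf i = (SOME w. fs!i dvd zs!i * w - [:-1:])" for i
  define ws where "ws = map wf [0..<length ns]"
  have ws: "fs!i dvd zs!i * ws!i - [:-1:]" if "i < length ns" for i
    using someI_ex[OF exw[OF that]] that by (simp add: ws_def wf_def)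
  define nzs where "nzs = map uminus zs"
  define nws where "nws = map uminus ws"
  have lws: "length ws = length ns" by (simp add: ws_def)
  have h1: "\<forall>i<length ns. fs!i dvd zs!i * ws!i - [:-1:]" using ws by blast
  have h2: "\<forall>i<length ns. fs!i dvd ws!i * nzs!i - [:1:]"
  proof (intro allI impI)
    fix i assume i: "i < length ns"
    have "ws!i * nzs!i - [:1:] = - (zs!i * ws!i - [:-1:])" using i assms(5)
      by (simp add: nzs_def algebra_simps)
    thus "fs!i dvd ws!i * nzs!i - [:1:]" using ws[OF i] by (simp only: dvd_minus_iff)
  qed
  have h3: "\<forall>i<length ns. fs!i dvd nzs!i * ws!i - [:1:]"
  proof (intro allI impI)
    fix i assume i: "i < length ns"
    have "nzs!i * ws!i - [:1:] = - (zs!i * ws!i - [:-1:])" using i assms(5)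
      by (simp add: nzs_def algebra_simps)
    thus "fs!i dvd nzs!i * ws!i - [:1:]" using ws[OF i] by (simp only: dvd_minus_iff)
  qed
  have h4: "\<forall>i<length ns. fs!i dvd zs!i * nws!i - [:1:]"
  proof (intro allI impI)
    fix i assume i: "i < length ns"
    have "zs!i * nws!i - [:1:] = - (zs!i * ws!i - [:-1:])" using i lws
      by (simp add: nws_def algebra_simps)
    thus "fs!i dvd zs!i * nws!i - [:1:]" using ws[OF i] by (simp only: dvd_minus_iff)
  qed
  have h5: "\<forall>i<length ns. fs!i dvd nws!i * zs!i - [:1:]"
  proof (intro allI impI)
    fix i assume i: "i < length ns"
    have "nws!i * zs!i - [:1:] = - (zs!i * ws!i - [:-1:])" using i lws
      by (simp add: nws_def algebra_simps)
    thus "fs!i dvd nws!i * zs!i - [:1:]" using ws[OF i] by (simp only: dvd_minus_iff)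
  qed
  let ?Mz = "Mm ns fs zs" and ?Mw = "Mm ns fs ws"
  have Mz: "?Mz \<in> carrier_mat n n" using Mm_carrier[of ns fs zs] nn by simp
  have Mw: "?Mw \<in> carrier_mat n n" using Mm_carrier[of ns fs ws] nn by simp
  have Mzi: "invertible_mat ?Mz"
    by (rule invI[OF Mz Mm_carrier[of ns fs nws, unfolded nn] Mm_inv_pair[OF g h4, unfolded nn] Mm_inv_pair[OF g h5, unfolded nn]])
  have Mwi: "invertible_mat ?Mw"
    by (rule invI[OF Mw Mm_carrier[of ns fs nzs, unfolded nn] Mm_inv_pair[OF g h2, unfolded nn] Mm_inv_pair[OF g h3, unfolded nn]])
  obtain Ai where Ai: "Ai \<in> carrier_mat n n" "A * Ai = 1\<^sub>m n" "Ai * A = 1\<^sub>m n"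
    using invE[OF assms(8,9)] by blast
  have Aii: "invertible_mat Ai" by (rule invI[OF Ai(1) assms(8) Ai(3) Ai(2)])
  define T where "T = Ai * ?Mz * A'"
  have T: "T \<in> carrier_mat n n" unfolding T_def using Ai Mz assms(10) by simp
  have Ti: "invertible_mat T" unfolding T_def
    by (intro inv_mult[of _ n] Aii Mzi assms(11)) (use Ai Mz assms(10) in simp_all)
  define N where "N = transpose_mat T"
  have N: "N \<in> carrier_mat n n" unfolding N_def using T by simp
  have Ni: "invertible_mat N" unfolding N_def by (rule inv_transpose[OF T Ti])
  define C where "C = ?Mw * N"
  have C: "C \<in> carrier_mat n n" unfolding C_def using Mw N by simp
  have Ci: "invertible_mat C" unfolding C_def by (rule inv_mult[OF Mw Mwi N Ni])
  have I: "1\<^sub>m n \<in> carrier_mat n n" "invertible_mat (1\<^sub>m n :: 'p mod_ring mat)"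
    by (auto intro: invI[of _ n "1\<^sub>m n"])
  have Tv: "T *\<^sub>v a = Ai *\<^sub>v (?Mz *\<^sub>v (A' *\<^sub>v a))" if a: "a \<in> carrier_vec n" for a
  proof -
    have "T *\<^sub>v a = (Ai * ?Mz) *\<^sub>v (A' *\<^sub>v a)" unfolding T_def
      by (rule assoc_mult_mat_vec[OF mult_carrier_mat[OF Ai(1) Mz] assms(10) a])
    also have "\<dots> = Ai *\<^sub>v (?Mz *\<^sub>v (A' *\<^sub>v a))"
      by (rule assoc_mult_mat_vec[OF Ai(1) Mz mult_mat_vec_carrier[OF assms(10) a]])
    finally show ?thesis .
  qed
  let ?r = "map_vec (of_int :: int \<Rightarrow> 'p mod_ring)"
  have V1: "(\<forall>i<length ns. fs ! i dvd (lam ns A i x - zs ! i * lam ns A' i y)) \<longleftrightarrow> ?r x = T *\<^sub>v ?r y"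
    if x: "x \<in> carrier_vec n" and y: "y \<in> carrier_vec n" for x y
  proof -
    have rx: "?r x \<in> carrier_vec (sum_list ns)" using x nn by simp
    have ry: "?r y \<in> carrier_vec (sum_list ns)" using y nn by simp
    have "(\<forall>i<length ns. fs ! i dvd (lam ns A i x - zs ! i * lam ns A' i y)) \<longleftrightarrow>
      (\<forall>i<length ns. fs ! i dvd Lam ns i (A *\<^sub>v ?r x) - zs ! i * Lam ns i (A' *\<^sub>v ?r y))"
      using lam_Lam[OF A, of x] lam_Lam[OF A', of y] x y nn by simp
    also have "\<dots> \<longleftrightarrow> A *\<^sub>v ?r x = ?Mz *\<^sub>v (A' *\<^sub>v ?r y)" by (rule Mm_equiv[OF g A A' rx ry])
    also have "\<dots> \<longleftrightarrow> ?r x = T *\<^sub>v ?r y"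
    proof
      assume e: "A *\<^sub>v ?r x = ?Mz *\<^sub>v (A' *\<^sub>v ?r y)"
      have rxn: "?r x \<in> carrier_vec n" using x by simp
      have ryn: "?r y \<in> carrier_vec n" using y by simp
      have "?r x = 1\<^sub>m n *\<^sub>v ?r x" using rxn by simp
      also have "\<dots> = (Ai * A) *\<^sub>v ?r x" by (simp only: Ai(3))
      also have "\<dots> = Ai *\<^sub>v (A *\<^sub>v ?r x)" by (rule assoc_mult_mat_vec[OF Ai(1) assms(8) rxn])
      also have "\<dots> = Ai *\<^sub>v (?Mz *\<^sub>v (A' *\<^sub>v ?r y))" by (simp only: e)
      also have "\<dots> = T *\<^sub>v ?r y" by (rule Tv[OF ryn, symmetric])
      finally show "?r x = T *\<^sub>v ?r y" .
    next
      assume e: "?r x = T *\<^sub>v ?r y"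
      have ryn: "?r y \<in> carrier_vec n" using y by simp
      have v1: "?Mz *\<^sub>v (A' *\<^sub>v ?r y) \<in> carrier_vec n" using Mz assms(10) ryn by simp
      have "A *\<^sub>v ?r x = A *\<^sub>v (Ai *\<^sub>v (?Mz *\<^sub>v (A' *\<^sub>v ?r y)))" unfolding e Tv[OF ryn] ..
      also have "\<dots> = (A * Ai) *\<^sub>v (?Mz *\<^sub>v (A' *\<^sub>v ?r y))"
        by (rule assoc_mult_mat_vec[OF assms(8) Ai(1) v1, symmetric])
      also have "\<dots> = 1\<^sub>m n *\<^sub>v (?Mz *\<^sub>v (A' *\<^sub>v ?r y))" by (simp only: Ai(2))
      also have "\<dots> = ?Mz *\<^sub>v (A' *\<^sub>v ?r y)" using v1 by simp
      finally show "A *\<^sub>v ?r x = ?Mz *\<^sub>v (A' *\<^sub>v ?r y)" .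
    qed
    finally show ?thesis .
  qed
  have V2: "(\<forall>i<length ns. fs ! i dvd (lam ns (1\<^sub>m n) i v - zs ! i * lam ns C i u)) \<longleftrightarrow> ?r v = (-1) \<cdot>\<^sub>v (N *\<^sub>v ?r u)"
    if u: "u \<in> carrier_vec n" and v: "v \<in> carrier_vec n" for u v
  proof -
    have ru: "?r u \<in> carrier_vec (sum_list ns)" using u nn by simp
    have rv: "?r v \<in> carrier_vec (sum_list ns)" using v nn by simp
    have I': "(1\<^sub>m n :: 'p mod_ring mat) \<in> carrier_mat (sum_list ns) (sum_list ns)" using nn by simp
    have C': "C \<in> carrier_mat (sum_list ns) (sum_list ns)" using C nn by simp
    have "(\<forall>i<length ns. fs ! i dvd (lam ns (1\<^sub>m n) i v - zs ! i * lam ns C i u)) \<longleftrightarrow>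
      (\<forall>i<length ns. fs ! i dvd Lam ns i (1\<^sub>m n *\<^sub>v ?r v) - zs ! i * Lam ns i (C *\<^sub>v ?r u))"
      using lam_Lam[OF I', of v] lam_Lam[OF C', of u] u v nn by simp
    also have "\<dots> \<longleftrightarrow> 1\<^sub>m n *\<^sub>v ?r v = ?Mz *\<^sub>v (C *\<^sub>v ?r u)" by (rule Mm_equiv[OF g I' C' rv ru])
    also have "1\<^sub>m n *\<^sub>v ?r v = ?r v" using rv nn by simp
    also have "C *\<^sub>v ?r u = ?Mw *\<^sub>v (N *\<^sub>v ?r u)" unfolding C_def
      by (rule assoc_mult_mat_vec[OF Mw N]) (use u in simp)
    also have "?Mz *\<^sub>v (?Mw *\<^sub>v (N *\<^sub>v ?r u)) = (-1) \<cdot>\<^sub>v (N *\<^sub>v ?r u)"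
    proof -
      have "N *\<^sub>v ?r u \<in> carrier_vec (sum_list ns)" using N ru nn by simp
      from Mm_comp[OF g this h1] show ?thesis by simp
    qed
    finally show ?thesis .
  qed
  have twon: "2 * n = n + n" by simp
  define q where "q = real CARD('p)"
  have q0: "q > 0" unfolding q_def by simp
  define Ls where "Ls = {map_vec real_of_int (x @\<^sub>v y) | x y.
                  x \<in> carrier_vec n \<and> y \<in> carrier_vec n \<and>
                  (\<forall>i<length ns. fs ! i dvd (lam ns A i x - zs ! i * lam ns A' i y))}"
  define Rs where "Rs = {map_vec real_of_int (u @\<^sub>v v) | u v.
                  u \<in> carrier_vec n \<and> v \<in> carrier_vec n \<and>
                  (\<forall>i<length ns. fs ! i dvd (lam ns (1\<^sub>m n) i v - zs ! i * lam ns C i u))}"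
  have Ls_mem: "map_vec real_of_int (x @\<^sub>v y) \<in> Ls" if "x \<in> carrier_vec n" "y \<in> carrier_vec n"
    "?r x = T *\<^sub>v ?r y" for x y
    unfolding Ls_def using that V1 by blast
  have dotsplit: "(a @\<^sub>v b) \<bullet> map_vec real_of_int (x @\<^sub>v y) = a \<bullet> map_vec real_of_int x + b \<bullet> map_vec real_of_int y"
    if "a \<in> carrier_vec n" "b \<in> carrier_vec n" "x \<in> carrier_vec n" "y \<in> carrier_vec n" for a b x y
    unfolding map_vec_append by (rule scalar_prod_append) (use that in simp_all)
  have "(\<lambda>w. q \<cdot>\<^sub>v w) ` dual_lattice (2 * n) Ls = Rs"
  proof
    show "(\<lambda>w. q \<cdot>\<^sub>v w) ` dual_lattice (2 * n) Ls \<subseteq> Rs"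
    proof
      fix gg assume "gg \<in> (\<lambda>w. q \<cdot>\<^sub>v w) ` dual_lattice (2 * n) Ls"
      then obtain w where gg: "gg = q \<cdot>\<^sub>v w" and w: "w \<in> carrier_vec (n + n)"
        and wL: "\<forall>X\<in>Ls. w \<bullet> X \<in> \<int>" unfolding dual_lattice_def twon by blast
      define wa where "wa = vec_first w n"
      define wb where "wb = vec_last w n"
      have wa: "wa \<in> carrier_vec n" and wb: "wb \<in> carrier_vec n" unfolding wa_def wb_def by simp_all
      have wab: "w = wa @\<^sub>v wb" unfolding wa_def wb_def using w by simp
      have key: "wa \<bullet> map_vec real_of_int x + wb \<bullet> map_vec real_of_int y \<in> \<int>"
        if "x \<in> carrier_vec n" "y \<in> carrier_vec n" "?r x = T *\<^sub>v ?r y" for x y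
        using wL Ls_mem[OF that] dotsplit[OF wa wb that(1,2)] wab by auto
      have inta: "q * wa $ k \<in> \<int>" if k: "k < n" for k
      proof -
        define x where "x = vec n (\<lambda>i. if i = k then int CARD('p) else 0)"
        have x: "x \<in> carrier_vec n" unfolding x_def by simp
        have rx: "?r x = 0\<^sub>v n" unfolding x_def by (rule eq_vecI) auto
        have "?r (0\<^sub>v n) = T *\<^sub>v ?r (0\<^sub>v n)" unfolding red_zero using mat_vec_zero[OF T] by simp
        then have "?r x = T *\<^sub>v ?r (0\<^sub>v n)" using rx by simp
        from key[OF x _ this] have "wa \<bullet> map_vec real_of_int x + wb \<bullet> map_vec real_of_int (0\<^sub>v n) \<in> \<int>" by simp
        moreover have "wb \<bullet> map_vec real_of_int (0\<^sub>v n) = 0" using wb by (simp add: scalar_prod_def)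
        moreover have "wa \<bullet> map_vec real_of_int x = wa $ k * q"
        proof -
          have "wa \<bullet> map_vec real_of_int x = (\<Sum>i\<in>{0..<n}. wa $ i * (if i = k then q else 0))"
            using wa unfolding x_def q_def by (auto simp: scalar_prod_def intro!: sum.cong)
          also have "\<dots> = wa $ k * q" using k by (simp add: if_distrib sum.delta cong: if_cong)
          finally show ?thesis .
        qed
        ultimately show ?thesis by (simp add: mult.commute)
      qed
      have intb: "q * wb $ k \<in> \<int>" if k: "k < n" for k
      proof -
        define y where "y = vec n (\<lambda>i. if i = k then int CARD('p) else 0)"
        have y: "y \<in> carrier_vec n" unfolding y_def by simp
        have ry: "?r y = 0\<^sub>v n" unfolding y_def by (rule eq_vecI) auto
        have "?r (0\<^sub>v n) = T *\<^sub>v ?r y" unfolding red_zero ry using mat_vec_zero[OF T] by simp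
        from key[OF _ y this] have "wa \<bullet> map_vec real_of_int (0\<^sub>v n) + wb \<bullet> map_vec real_of_int y \<in> \<int>" by simp
        moreover have "wa \<bullet> map_vec real_of_int (0\<^sub>v n) = 0" using wa by (simp add: scalar_prod_def)
        moreover have "wb \<bullet> map_vec real_of_int y = wb $ k * q"
        proof -
          have "wb \<bullet> map_vec real_of_int y = (\<Sum>i\<in>{0..<n}. wb $ i * (if i = k then q else 0))"
            using wb unfolding y_def q_def by (auto simp: scalar_prod_def intro!: sum.cong)
          also have "\<dots> = wb $ k * q" using k by (simp add: if_distrib sum.delta cong: if_cong)
          finally show ?thesis .
        qed
        ultimately show ?thesis by (simp add: mult.commute)
      qed
      define u where "u = vec n (\<lambda>k. \<lfloor>q * wa $ k\<rfloor>)"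
      define v where "v = vec n (\<lambda>k. \<lfloor>q * wb $ k\<rfloor>)"
      have u: "u \<in> carrier_vec n" and v: "v \<in> carrier_vec n" unfolding u_def v_def by simp_all
      have hu: "\<forall>i<n. q * wa $ i = real_of_int (u $ i)" using inta by (simp add: u_def of_int_floor)
      have hv: "\<forall>i<n. q * wb $ i = real_of_int (v $ i)" using intb by (simp add: v_def of_int_floor)
      have gg2: "gg = map_vec real_of_int (u @\<^sub>v v)"
      proof (rule eq_vecI)
        show "dim_vec gg = dim_vec (map_vec real_of_int (u @\<^sub>v v))" using gg w u v by simp
        fix i assume "i < dim_vec (map_vec real_of_int (u @\<^sub>v v))"
        then have i: "i < n + n" using u v by simp
        show "gg $ i = map_vec real_of_int (u @\<^sub>v v) $ i"
        proof (cases "i < n")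
          case True
          have "gg $ i = q * wa $ i" using i True w unfolding gg wa_def by (simp add: vec_first_def)
          thus ?thesis using hu True u v by (simp add: append_vec_def Let_def)
        next
          case False
          have ni: "n + (i - n) = i" using False by simp
          have "gg $ i = q * wb $ (i - n)" using i False w ni unfolding gg wb_def by (simp add: vec_last_def)
          thus ?thesis using hv False u v i by (simp add: append_vec_def Let_def)
        qed
      qed
      have cond: "?r v = (-1) \<cdot>\<^sub>v (N *\<^sub>v ?r u)"
      proof (rule eq_vecI)
        show "dim_vec (?r v) = dim_vec ((-1) \<cdot>\<^sub>v (N *\<^sub>v ?r u))" using v N by simp
        fix k assume "k < dim_vec ((-1) \<cdot>\<^sub>v (N *\<^sub>v ?r u))"
        then have k: "k < n" using N by simp
        define y :: "int vec" where "y = unit_vec n k"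
        define x where "x = map_vec to_int_mod_ring (T *\<^sub>v unit_vec n k)"
        have y: "y \<in> carrier_vec n" unfolding y_def by simp
        have x: "x \<in> carrier_vec n" unfolding x_def using T by simp
        have ry: "?r y = unit_vec n k" unfolding y_def by (rule red_unit)
        have rx: "?r x = T *\<^sub>v unit_vec n k" unfolding x_def by (rule red_lift)
        have "?r x = T *\<^sub>v ?r y" using rx ry by simp
        from key[OF x y this] obtain s where s: "wa \<bullet> map_vec real_of_int x + wb \<bullet> map_vec real_of_int y = of_int s"
          by (auto elim: Ints_cases)
        have "real_of_int (u \<bullet> x + v \<bullet> y) = q * (wa \<bullet> map_vec real_of_int x + wb \<bullet> map_vec real_of_int y)"
          using real_scalar[OF u x wa hu] real_scalar[OF v y wb hv] by (simp add: distrib_left)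
        also have "\<dots> = real_of_int (int CARD('p) * s)" using s by (simp add: q_def)
        finally have "u \<bullet> x + v \<bullet> y = int CARD('p) * s" by (simp only: of_int_eq_iff)
        then have "(of_int (u \<bullet> x + v \<bullet> y) :: 'p mod_ring) = 0" by (simp add: mod_ring_zero_iff)
        then have "?r u \<bullet> ?r x + ?r v \<bullet> ?r y = 0"
          using of_int_scalar[OF u x, where 'b="'p mod_ring"] of_int_scalar[OF v y, where 'b="'p mod_ring"] by simp
        moreover have "?r u \<bullet> ?r x = (N *\<^sub>v ?r u) $ k"
        proof -
          have "?r u \<bullet> ?r x = ?r u \<bullet> (T *\<^sub>v unit_vec n k)" using rx by simp
          also have "\<dots> = (N *\<^sub>v ?r u) \<bullet> unit_vec n k" unfolding N_def
            by (rule transpose_vec_mult_scalar[symmetric, OF T]) (use u in simp_all)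
          also have "\<dots> = (N *\<^sub>v ?r u) $ k" using k by simp
          finally show ?thesis .
        qed
        moreover have "?r v \<bullet> ?r y = ?r v $ k" using ry k by simp
        ultimately have "?r v $ k = - (N *\<^sub>v ?r u) $ k" by (simp add: eq_neg_iff_add_eq_0 add.commute)
        thus "?r v $ k = ((-1) \<cdot>\<^sub>v (N *\<^sub>v ?r u)) $ k" using k N by simp
      qed
      show "gg \<in> Rs" unfolding Rs_def gg2 using u v cond V2[OF u v] by blast
    qed
  next
    show "Rs \<subseteq> (\<lambda>w. q \<cdot>\<^sub>v w) ` dual_lattice (2 * n) Ls"
    proof
      fix gg assume "gg \<in> Rs"
      then obtain u v where gg: "gg = map_vec real_of_int (u @\<^sub>v v)" and u: "u \<in> carrier_vec n"
        and v: "v \<in> carrier_vec n" and c: "\<forall>i<length ns. fs ! i dvd (lam ns (1\<^sub>m n) i v - zs ! i * lam ns C i u)"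
        unfolding Rs_def by blast
      have cond: "?r v = (-1) \<cdot>\<^sub>v (N *\<^sub>v ?r u)" using V2[OF u v] c by simp
      define w where "w = (1 / q) \<cdot>\<^sub>v gg"
      have gw: "gg = q \<cdot>\<^sub>v w" unfolding w_def using q0 by (intro eq_vecI) auto
      have gc: "gg \<in> carrier_vec (n + n)" unfolding gg using u v by simp
      have "w \<in> dual_lattice (2 * n) Ls"
        unfolding dual_lattice_def twon
      proof (intro CollectI conjI ballI)
        show "w \<in> carrier_vec (n + n)" unfolding w_def using gc by simp
        fix X assume "X \<in> Ls"
        then obtain x y where X: "X = map_vec real_of_int (x @\<^sub>v y)" and x: "x \<in> carrier_vec n"
          and y: "y \<in> carrier_vec n" and cx: "\<forall>i<length ns. fs ! i dvd (lam ns A i x - zs ! i * lam ns A' i y)"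
          unfolding Ls_def by blast
        have rxy: "?r x = T *\<^sub>v ?r y" using V1[OF x y] cx by simp
        have "(of_int (u \<bullet> x + v \<bullet> y) :: 'p mod_ring) = ?r u \<bullet> ?r x + ?r v \<bullet> ?r y"
          using of_int_scalar[OF u x, where 'b="'p mod_ring"] of_int_scalar[OF v y, where 'b="'p mod_ring"] by simp
        also have "?r u \<bullet> ?r x = (N *\<^sub>v ?r u) \<bullet> ?r y" unfolding rxy N_def
          by (rule transpose_vec_mult_scalar[symmetric, OF T]) (use u y in simp_all)
        also have "?r v \<bullet> ?r y = - ((N *\<^sub>v ?r u) \<bullet> ?r y)" unfolding cond
          using N u y by simp
        finally have "(of_int (u \<bullet> x + v \<bullet> y) :: 'p mod_ring) = 0" by simp
        then obtain s where s: "u \<bullet> x + v \<bullet> y = int CARD('p) * s" unfolding mod_ring_zero_iff by blast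
        have "gg \<bullet> X = map_vec real_of_int u \<bullet> map_vec real_of_int x + map_vec real_of_int v \<bullet> map_vec real_of_int y"
          unfolding gg X map_vec_append by (rule scalar_prod_append) (use u v x y in simp_all)
        also have "\<dots> = real_of_int (u \<bullet> x + v \<bullet> y)"
          using real_scalar[OF u x _, of "map_vec real_of_int u" 1] real_scalar[OF v y _, of "map_vec real_of_int v" 1] u v
          by simp
        finally have "gg \<bullet> X = q * of_int s" using s by (simp add: q_def)
        then have "w \<bullet> X = of_int s" unfolding w_def using gc X x y q0
          by (subst smult_scalar_prod_distrib[of _ "n + n"]) auto
        thus "w \<bullet> X \<in> \<int>" by simp
      qed
      thus "gg \<in> (\<lambda>w. q \<cdot>\<^sub>v w) ` dual_lattice (2 * n) Ls" using gw by blast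
    qed
  qed
  thus ?thesis unfolding Ls_def Rs_def q_def
    using I C Ci by blast
qed

end
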